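(* Let $\mathcal X,\mathcal Y$ be Hilbert spaces and $\mathbf A\colon\mathcal X\to\mathcal Y$ a bounded linear operator with singular value decomposition $\mathbf Ax=\sum_{n\in\mathbb N}\sigma_n\langle u_n,x\rangle v_n$, where $(u_n)$, $(v_n)$ are orthonormal systems in $\mathcal X$, $\mathcal Y$ and $\sigma_n>0$. Let $\mathbf B_\alpha(y)=\sum_{\sigma_n^2\ge\alpha}\sigma_n^{-1}\langle y,v_n\rangle u_n$ be truncated SVD, let $(\mathbf U_{\theta(\alpha)})_{\alpha>0}$ be maps $\mathcal X\to\mathcal X$, and define $$\nu_{\theta(\alpha)}(z)\coloneqq(\mathrm{Id}_{\mathcal X}-\mathbf B_\alpha\mathbf A)\mathbf U_{\theta(\alpha)}(z)=\sum_{\sigma_n^2<\alpha}\langle\mathbf U_{\theta(\alpha)}z,u_n\rangle u_n,\qquad \mathbf R_\alpha(y_\delta)\coloneqq(\mathrm{Id}_{\mathcal X}+\nu_{\theta(\alpha)})\mathbf B_\alpha(y_\delta).$$ Let $\mathrm{Id}_{\mathcal X}+\mathbf N$ be a null space network, $\mathcal M\coloneqq(\mathrm{Id}_{\mathcal X}+\mathbf N)(\operatorname{ran}(\mathbf A^{+}))$, and assume $(\nu_{\theta(\alpha)})_{\alpha>0}$ is $((\mathbf B_\alpha)_{\alpha>0},\mathbf N)$-adapted. Let $\rho,\mu>0$ and assume $d_\alpha(x;\rho,\mu)=\mathcal O(\alpha^\mu)$ for all $x$ in some set $\mathcal M_{\rho,\mu}\subseteq\mathcal M$. Then, provided $\alpha\asymp\delta^{2/(2\mu+1)}$,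 for all $x\in\mathcal M_{\rho,\mu}$ and $y_\delta\in\mathcal Y$ with $\|\mathbf Ax-y_\delta\|\le\delta$ we have $\|\mathbf R_\alpha(y_\delta)-x\|=\mathcal O(\delta^{2\mu/(2\mu+1)})$ as $\alpha\to0$.
   Context: $\mathbf A^{+}$ is the Moore–Penrose inverse, $\operatorname{ran}(\mathbf A^{+})=\ker(\mathbf A)^\perp$. A null space network is $\mathrm{Id}_{\mathcal X}+\mathbf N$ with $\mathbf N=\mathbf P_{\ker(\mathbf A)}\mathbf U$, $\mathbf P_{\ker(\mathbf A)}$ the orthogonal projection onto $\ker(\mathbf A)$ and $\mathbf U\colon\mathcal X\to\mathcal X$ Lipschitz. A family of Lipschitz maps $\nu_{\theta(\alpha)}\colon\mathcal X\to\mathcal X$ is $((\mathbf B_\alpha),\mathbf N)$-adapted if $\nu_{\theta(\alpha)}(\mathbf B_\alpha\mathbf Az)\to\mathbf N(z)$ as $\alpha\to0$ for all $z\in\operatorname{ran}(\mathbf A^{+})$ and all Lipschitz constants are bounded by some $L>0$. Distance function: $d_\alpha(x;\rho,\mu)\coloneqq\inf\{\|x-\nu_{\theta(\alpha)}\mathbf B_\alpha\mathbf Ax-(\mathbf A^*\mathbf A)^\mu\omega\|:\omega\in\mathcal X,\ \|\omega\|\le\rho\}$. *)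

theory Defs
  imports "HOL-Analysis.Analysis"
begin

definition orthonormal_seq :: "(nat \<Rightarrow> 'a::real_inner) \<Rightarrow> bool" where
  "orthonormal_seq u \<longleftrightarrow> (\<forall>m n. u m \<bullet> u n = (if m = n then 1 else 0))"

definition ker_op :: "('a \<Rightarrow> 'b::real_vector) \<Rightarrow> 'a set" where
  "ker_op A = {x. A x = 0}"

definition orth_compl :: "'a::real_inner set \<Rightarrow> 'a set" where
  "orth_compl K = {z. \<forall>k\<in>K. z \<bullet> k = 0}"

definition orth_proj :: "'a::real_inner set \<Rightarrow> 'a \<Rightarrow> 'a" where
  "orth_proj K x = (THE p. p \<in> K \<and> x - p \<in> orth_compl K)"

definition tsvd :: "(nat \<Rightarrow> real) \<Rightarrow> (nat \<Rightarrow> 'a::{real_inner,complete_space})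
    \<Rightarrow> (nat \<Rightarrow> 'b::real_inner) \<Rightarrow> real \<Rightarrow> 'b \<Rightarrow> 'a" where
  "tsvd \<sigma> u v \<alpha> y = infsum (\<lambda>n. (inverse (\<sigma> n) * (y \<bullet> v n)) *\<^sub>R u n) {n. \<alpha> \<le> (\<sigma> n)\<^sup>2}"

text \<open>Fractional power (A^* A)^mu via the singular system:
  (A^* A)^mu w = sum_n sigma_n^(2 mu) <w,u_n> u_n  (mu > 0).\<close>
definition svd_pow :: "(nat \<Rightarrow> real) \<Rightarrow> (nat \<Rightarrow> 'a::{real_inner,complete_space})
    \<Rightarrow> real \<Rightarrow> 'a \<Rightarrow> 'a" where
  "svd_pow \<sigma> u \<mu> \<omega> = infsum (\<lambda>n. ((\<sigma> n) powr (2 * \<mu>) * (\<omega> \<bullet> u n)) *\<^sub>R u n) UNIV"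

text \<open>nu_theta(alpha)(z) = (Id - B_alpha A) U_theta(alpha)(z); U alpha stands for U_theta(alpha).\<close>
definition nu_op :: "('a \<Rightarrow> 'b) \<Rightarrow> (nat \<Rightarrow> real) \<Rightarrow> (nat \<Rightarrow> 'a::{real_inner,complete_space})
    \<Rightarrow> (nat \<Rightarrow> 'b::real_inner) \<Rightarrow> (real \<Rightarrow> 'a \<Rightarrow> 'a) \<Rightarrow> real \<Rightarrow> 'a \<Rightarrow> 'a" where
  "nu_op A \<sigma> u v U \<alpha> z = U \<alpha> z - tsvd \<sigma> u v \<alpha> (A (U \<alpha> z))"

definition R_op :: "('a \<Rightarrow> 'b) \<Rightarrow> (nat \<Rightarrow> real) \<Rightarrow> (nat \<Rightarrow> 'a::{real_inner,complete_space})
    \<Rightarrow> (nat \<Rightarrow> 'b::real_inner) \<Rightarrow> (real \<Rightarrow> 'a \<Rightarrow> 'a) \<Rightarrow> real \<Rightarrow> 'b \<Rightarrow> 'a" where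
  "R_op A \<sigma> u v U \<alpha> y = tsvd \<sigma> u v \<alpha> y + nu_op A \<sigma> u v U \<alpha> (tsvd \<sigma> u v \<alpha> y)"

definition null_space_network :: "('a \<Rightarrow> 'b::real_vector) \<Rightarrow> ('a::real_inner \<Rightarrow> 'a) \<Rightarrow> bool" where
  "null_space_network A N \<longleftrightarrow>
     (\<exists>U0 C. C-lipschitz_on UNIV U0 \<and> (\<forall>x. N x = orth_proj (ker_op A) (U0 x)))"

definition adapted :: "('a \<Rightarrow> 'b::real_vector) \<Rightarrow> (real \<Rightarrow> 'b \<Rightarrow> 'a)
    \<Rightarrow> (real \<Rightarrow> 'a \<Rightarrow> 'a) \<Rightarrow> ('a::real_inner \<Rightarrow> 'a) \<Rightarrow> bool" where
  "adapted A B \<nu> N \<longleftrightarrow>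
     (\<forall>z \<in> orth_compl (ker_op A). ((\<lambda>\<alpha>. \<nu> \<alpha> (B \<alpha> (A z))) \<longlongrightarrow> N z) (at_right 0))
     \<and> (\<exists>L>0. \<forall>\<alpha>>0. L-lipschitz_on UNIV (\<nu> \<alpha>))"

definition dist_fun :: "('a \<Rightarrow> 'b) \<Rightarrow> (nat \<Rightarrow> real) \<Rightarrow> (nat \<Rightarrow> 'a::{real_inner,complete_space})
    \<Rightarrow> (nat \<Rightarrow> 'b::real_inner) \<Rightarrow> (real \<Rightarrow> 'a \<Rightarrow> 'a) \<Rightarrow> real \<Rightarrow> 'a \<Rightarrow> real \<Rightarrow> real \<Rightarrow> real" where
  "dist_fun A \<sigma> u v U \<alpha> x \<rho> \<mu> =
     Inf {norm (x - nu_op A \<sigma> u v U \<alpha> (tsvd \<sigma> u v \<alpha> (A x)) - svd_pow \<sigma> u \<mu> \<omega>) | \<omega>. norm \<omega> \<le> \<rho>}"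

end

theory Submission
  imports Defs
begin


lemma my_infsum_diff:
  fixes f g :: "'i \<Rightarrow> 'a::real_normed_vector"
  assumes "f summable_on A" "g summable_on A"
  shows "infsum (\<lambda>x. f x - g x) A = infsum f A - infsum g A"
proof -
  have "(\<lambda>x. - g x) summable_on A" using assms(2) by (simp add: summable_on_uminus)
  then have "infsum (\<lambda>x. f x + - g x) A = infsum f A + infsum (\<lambda>x. - g x) A"
    by (intro infsum_add assms)
  then show ?thesis by (simp add: infsum_uminus)
qed

lemma summable_on_Cauchy_crit:
  fixes f :: "'i \<Rightarrow> 'a::{real_normed_vector,complete_space}"
  assumes "\<And>e. e>0 \<Longrightarrow> \<exists>F0. finite F0 \<and> F0 \<subseteq> A \<and>
             (\<forall>F. finite F \<and> F \<subseteq> A \<and> F \<inter> F0 = {} \<longrightarrow> norm (sum f F) < e)"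
  shows "f summable_on A"
proof -
  have cf: "cauchy_filter (filtermap (sum f) (finite_subsets_at_top A))"
  proof (subst cauchy_filter_metric_filtermap, intro allI impI)
    fix e :: real assume e: "e > 0"
    then obtain F0 where F0: "finite F0" "F0 \<subseteq> A"
      "\<And>F. finite F \<Longrightarrow> F \<subseteq> A \<Longrightarrow> F \<inter> F0 = {} \<Longrightarrow> norm (sum f F) < e/2"
      using assms[of "e/2"] e by (meson half_gt_zero)
    let ?P = "\<lambda>X. finite X \<and> F0 \<subseteq> X \<and> X \<subseteq> A"
    have ev: "eventually ?P (finite_subsets_at_top A)"
      unfolding eventually_finite_subsets_at_top using F0 by blast
    have dd: "dist (sum f X) (sum f Y) < e" if "?P X" "?P Y" for X Y
    proof -
      have X: "sum f X = sum f (X - F0) + sum f F0"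
        using sum.subset_diff[where A=X and B=F0 and g=f] that by blast
      have Y: "sum f Y = sum f (Y - F0) + sum f F0"
        using sum.subset_diff[where A=Y and B=F0 and g=f] that by blast
      have "norm (sum f (X - F0)) < e/2"
        using that F0(3)[of "X - F0"] by blast
      moreover have "norm (sum f (Y - F0)) < e/2"
        using that F0(3)[of "Y - F0"] by blast
      ultimately have "norm (sum f (X - F0) - sum f (Y - F0)) < e"
        using norm_triangle_ineq4[of "sum f (X - F0)" "sum f (Y - F0)"] by linarith
      then show ?thesis by (simp add: X Y dist_norm)
    qed
    show "\<exists>P. eventually P (finite_subsets_at_top A) \<and>
        (\<forall>x y. P x \<and> P y \<longrightarrow> dist (sum f x) (sum f y) < e)"
    proof (intro exI[of _ ?P] conjI allI impI)
      show "eventually ?P (finite_subsets_at_top A)" by (rule ev)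
      fix x y assume "?P x \<and> ?P y"
      then show "dist (sum f x) (sum f y) < e" using dd by blast
    qed
  qed
  have nb: "filtermap (sum f) (finite_subsets_at_top A) \<noteq> bot"
    by (simp add: filtermap_bot_iff)
  obtain c where "filtermap (sum f) (finite_subsets_at_top A) \<le> nhds c"
    using cauchy_filter_complete_converges[OF cf complete_UNIV _ nb] by auto
  then show ?thesis
    by (auto simp: summable_on_def has_sum_def filterlim_def)
qed

lemma norm_infsum_finite_bound:
  fixes f :: "'i \<Rightarrow> 'a::real_normed_vector"
  assumes "\<And>F. finite F \<Longrightarrow> F \<subseteq> A \<Longrightarrow> norm (sum f F) \<le> B"
  shows "norm (infsum f A) \<le> B"
proof (cases "f summable_on A")
  case True
  then have "(sum f \<longlongrightarrow> infsum f A) (finite_subsets_at_top A)"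
    using has_sum_def has_sum_infsum by blast
  then have "((\<lambda>F. norm (sum f F)) \<longlongrightarrow> norm (infsum f A)) (finite_subsets_at_top A)"
    by (rule tendsto_norm)
  moreover have "eventually (\<lambda>F. norm (sum f F) \<le> B) (finite_subsets_at_top A)"
    unfolding eventually_finite_subsets_at_top using assms by blast
  ultimately show ?thesis
    by (intro tendsto_upperbound) auto
next
  case False
  then show ?thesis using assms[of "{}"] by (simp add: infsum_not_exists)
qed

lemma ons_fin_inner:
  assumes "orthonormal_seq u" "finite F"
  shows "(\<Sum>n\<in>F. c n *\<^sub>R u n) \<bullet> u m = (if m \<in> F then c m else 0)"
proof -
  have eq: "(\<lambda>n. c n * (u n \<bullet> u m)) = (\<lambda>n. if n = m then c m else 0)"
    using assms(1) by (auto simp: orthonormal_seq_def)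
  have "(\<Sum>n\<in>F. c n *\<^sub>R u n) \<bullet> u m = (\<Sum>n\<in>F. c n * (u n \<bullet> u m))"
    by (simp add: inner_sum_left)
  also have "\<dots> = (\<Sum>n\<in>F. if n = m then c m else 0)" by (simp only: eq)
  finally show ?thesis using assms(2) by simp
qed

lemma ons_fin_norm:
  assumes "orthonormal_seq u" "finite F"
  shows "(norm (\<Sum>n\<in>F. c n *\<^sub>R u n))\<^sup>2 = (\<Sum>n\<in>F. (c n)\<^sup>2)"
proof -
  have "(norm (\<Sum>n\<in>F. c n *\<^sub>R u n))\<^sup>2 = (\<Sum>n\<in>F. c n *\<^sub>R u n) \<bullet> (\<Sum>n\<in>F. c n *\<^sub>R u n)"
    by (simp add: power2_norm_eq_inner)
  also have "\<dots> = (\<Sum>m\<in>F. c m * ((\<Sum>n\<in>F. c n *\<^sub>R u n) \<bullet> u m))"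
    by (simp add: inner_sum_right)
  also have "\<dots> = (\<Sum>m\<in>F. (c m)\<^sup>2)"
    using ons_fin_inner[OF assms] by (simp add: power2_eq_square)
  finally show ?thesis .
qed

lemma bessel_fin:
  assumes "orthonormal_seq u" "finite F"
  shows "(\<Sum>n\<in>F. (x \<bullet> u n)\<^sup>2) \<le> (norm x)\<^sup>2"
proof -
  define s where "s = (\<Sum>n\<in>F. (x \<bullet> u n) *\<^sub>R u n)"
  have ss: "s \<bullet> s = (\<Sum>n\<in>F. (x \<bullet> u n)\<^sup>2)"
    using ons_fin_norm[OF assms, of "\<lambda>n. x \<bullet> u n"] by (simp add: s_def power2_norm_eq_inner)
  have xs: "x \<bullet> s = (\<Sum>n\<in>F. (x \<bullet> u n)\<^sup>2)"
    by (simp add: s_def inner_sum_right power2_eq_square)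
  have "0 \<le> (x - s) \<bullet> (x - s)" by simp
  also have "\<dots> = x \<bullet> x - 2 * (x \<bullet> s) + s \<bullet> s"
    by (simp add: inner_diff_left inner_diff_right inner_commute)
  finally show ?thesis using ss xs by (simp add: power2_norm_eq_inner)
qed

lemma ons_summable:
  fixes u :: "nat \<Rightarrow> 'a::{real_inner,complete_space}"
  assumes "orthonormal_seq u"
    and K: "\<And>F. finite F \<Longrightarrow> F \<subseteq> A \<Longrightarrow> (\<Sum>n\<in>F. (c n)\<^sup>2) \<le> K"
  shows "(\<lambda>n. c n *\<^sub>R u n) summable_on A"
proof (rule summable_on_Cauchy_crit[where f="\<lambda>n. c n *\<^sub>R u n"])
  fix e :: real assume e: "e > 0"
  have "(\<lambda>n. (c n)\<^sup>2) summable_on A"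
    by (rule nonneg_bdd_above_summable_on) (use K in \<open>auto intro!: bdd_aboveI\<close>)
  then have hs: "((\<lambda>n. (c n)\<^sup>2) has_sum infsum (\<lambda>n. (c n)\<^sup>2) A) A" by (rule has_sum_infsum)
  obtain F0 where F0: "finite F0" "F0 \<subseteq> A" "dist (\<Sum>n\<in>F0. (c n)\<^sup>2) (infsum (\<lambda>n. (c n)\<^sup>2) A) \<le> e\<^sup>2 / 2"
    using has_sum_finite_approximation[OF hs, of "e\<^sup>2/2"] e by auto
  have "norm (\<Sum>n\<in>F. c n *\<^sub>R u n) < e" if F: "finite F" "F \<subseteq> A" "F \<inter> F0 = {}" for F
  proof -
    have "(\<Sum>n\<in>F \<union> F0. (c n)\<^sup>2) \<le> infsum (\<lambda>n. (c n)\<^sup>2) A"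
      using F F0 by (intro finite_sum_le_has_sum[OF hs]) auto
    then have "(\<Sum>n\<in>F. (c n)\<^sup>2) + (\<Sum>n\<in>F0. (c n)\<^sup>2) \<le> infsum (\<lambda>n. (c n)\<^sup>2) A"
      using F0 F by (simp add: sum.union_disjoint)
    then have "(\<Sum>n\<in>F. (c n)\<^sup>2) \<le> e\<^sup>2/2"
      using F0(3) abs_ge_minus_self[of "(\<Sum>n\<in>F0. (c n)\<^sup>2) - infsum (\<lambda>n. (c n)\<^sup>2) A"]
      unfolding dist_real_def by linarith
    moreover have "e\<^sup>2 > 0" using e by simp
    ultimately have "(\<Sum>n\<in>F. (c n)\<^sup>2) < e\<^sup>2" by linarith
    then have "(norm (\<Sum>n\<in>F. c n *\<^sub>R u n))\<^sup>2 < e\<^sup>2"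
      using ons_fin_norm[OF assms(1) F(1), of c] by simp
    then show ?thesis using e by (simp add: power_less_imp_less_base)
  qed
  then show "\<exists>F0. finite F0 \<and> F0 \<subseteq> A \<and>
      (\<forall>F. finite F \<and> F \<subseteq> A \<and> F \<inter> F0 = {} \<longrightarrow> norm (\<Sum>n\<in>F. c n *\<^sub>R u n) < e)"
    using F0 by blast
qed

lemma infsum_inner_left:
  fixes f :: "'i \<Rightarrow> 'a::real_inner"
  assumes "f summable_on A"
  shows "infsum f A \<bullet> y = infsum (\<lambda>n. f n \<bullet> y) A"
  using has_sum_bounded_linear[OF bounded_linear_inner_left has_sum_infsum[OF assms], of y]
  by (simp add: infsumI)

lemma infsum_delta:
  "infsum (\<lambda>n. if n = m then (a::'b::{comm_monoid_add,t2_space}) else 0) A = (if m \<in> A then a else 0)"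
proof -
  have "infsum (\<lambda>n. if n = m then a else 0) A = infsum (\<lambda>n. if n = m then a else 0) (A \<inter> {m})"
    by (rule infsum_cong_neutral) auto
  then show ?thesis by (cases "m \<in> A") auto
qed

lemma ons_infsum_inner:
  fixes u :: "nat \<Rightarrow> 'a::{real_inner,complete_space}"
  assumes "orthonormal_seq u" "(\<lambda>n. c n *\<^sub>R u n) summable_on A"
  shows "infsum (\<lambda>n. c n *\<^sub>R u n) A \<bullet> u m = (if m \<in> A then c m else 0)"
proof -
  have eq: "(\<lambda>n. c n * (u n \<bullet> u m)) = (\<lambda>n. if n = m then c m else 0)"
    using assms(1) by (auto simp: orthonormal_seq_def)
  have "infsum (\<lambda>n. c n *\<^sub>R u n) A \<bullet> u m = infsum (\<lambda>n. if n = m then c m else 0) A"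
    by (simp add: infsum_inner_left[OF assms(2)] eq)
  then show ?thesis by (simp add: infsum_delta)
qed


definition Qp :: "(nat \<Rightarrow> 'a::real_inner) \<Rightarrow> nat set \<Rightarrow> 'a \<Rightarrow> 'a" where
  "Qp u S z = infsum (\<lambda>n. (z \<bullet> u n) *\<^sub>R u n) S"

context
  fixes u :: "nat \<Rightarrow> 'a::{real_inner,complete_space}"
  assumes on: "orthonormal_seq u"
begin

lemma Q_summ: "(\<lambda>n. (z \<bullet> u n) *\<^sub>R u n) summable_on S"
  by (rule ons_summable[OF on, where K="(norm z)\<^sup>2"]) (rule bessel_fin[OF on])

lemma Q_inner: "Qp u S z \<bullet> u m = (if m \<in> S then z \<bullet> u m else 0)"
  unfolding Qp_def by (rule ons_infsum_inner[OF on Q_summ])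

lemma Q_diff: "Qp u S (a - b) = Qp u S a - Qp u S b"
  unfolding Qp_def
  by (simp add: inner_diff_left scaleR_diff_left my_infsum_diff[OF Q_summ Q_summ])

lemma Q_zero: "Qp u S 0 = 0"
  by (simp add: Qp_def)

lemma Q_idem: "Qp u S (Qp u S z) = Qp u S z"
proof -
  have "Qp u S (Qp u S z) = infsum (\<lambda>n. (z \<bullet> u n) *\<^sub>R u n) S"
    unfolding Qp_def[of u S "Qp u S z"] by (rule infsum_cong) (simp add: Q_inner)
  then show ?thesis by (simp add: Qp_def)
qed

lemma Q_inner_gen: "Qp u S z \<bullet> w = infsum (\<lambda>n. (z \<bullet> u n) * (u n \<bullet> w)) S"
  unfolding Qp_def by (simp add: infsum_inner_left[OF Q_summ])

lemma Q_contr: "norm (z - Qp u S z) \<le> norm z"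
proof -
  define X where "X = infsum (\<lambda>n. (z \<bullet> u n) * (z \<bullet> u n)) S"
  have 1: "Qp u S z \<bullet> Qp u S z = X"
    unfolding Q_inner_gen[of S z "Qp u S z"] X_def
    by (rule infsum_cong) (simp add: inner_commute[of "u _"] Q_inner)
  have 2: "Qp u S z \<bullet> z = X"
    unfolding Q_inner_gen[of S z z] X_def
    by (rule infsum_cong) (simp add: inner_commute)
  have "(norm (z - Qp u S z))\<^sup>2 = z \<bullet> z - 2 * (Qp u S z \<bullet> z) + Qp u S z \<bullet> Qp u S z"
    by (simp add: power2_norm_eq_inner inner_diff_left inner_diff_right inner_commute)
  also have "\<dots> = (norm z)\<^sup>2 - X" using 1 2 by (simp add: power2_norm_eq_inner)
  also have "\<dots> \<le> (norm z)\<^sup>2" using 1 inner_ge_zero[of "Qp u S z"] by linarith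
  finally have "(norm (z - Qp u S z))\<^sup>2 \<le> (norm z)\<^sup>2" .
  then show ?thesis by (rule power2_le_imp_le) simp
qed

end


lemma svd_coeff:
  fixes A :: "'a::real_inner \<Rightarrow> 'b::{real_inner,complete_space}"
  assumes von: "orthonormal_seq v"
    and svd: "\<And>x. ((\<lambda>n. (\<sigma> n * (u n \<bullet> x)) *\<^sub>R v n) has_sum A x) UNIV"
  shows "A z \<bullet> v m = \<sigma> m * (u m \<bullet> z)"
proof -
  have h: "((\<lambda>n. ((\<sigma> n * (u n \<bullet> z)) *\<^sub>R v n) \<bullet> v m) has_sum (A z \<bullet> v m)) UNIV"
    by (rule has_sum_bounded_linear[OF bounded_linear_inner_left svd])
  have eq: "(\<lambda>n. ((\<sigma> n * (u n \<bullet> z)) *\<^sub>R v n) \<bullet> v m) = (\<lambda>n. if n = m then \<sigma> m * (u m \<bullet> z) else 0)"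
    using von by (auto simp: orthonormal_seq_def)
  have "A z \<bullet> v m = infsum (\<lambda>n. if n = m then \<sigma> m * (u m \<bullet> z) else 0) UNIV"
    using infsumI[OF h] by (simp only: eq)
  then show ?thesis by (simp add: infsum_delta)
qed

lemma tsvd_A:
  fixes A :: "'a::{real_inner,complete_space} \<Rightarrow> 'b::{real_inner,complete_space}"
  assumes von: "orthonormal_seq v" and pos: "\<And>n. \<sigma> n > 0"
    and svd: "\<And>x. ((\<lambda>n. (\<sigma> n * (u n \<bullet> x)) *\<^sub>R v n) has_sum A x) UNIV"
  shows "tsvd \<sigma> u v \<alpha> (A z) = Qp u {n. \<alpha> \<le> (\<sigma> n)\<^sup>2} z"
  unfolding tsvd_def Qp_def
proof (rule infsum_cong)
  fix n
  have "\<sigma> n \<noteq> 0" using pos[of n] by simp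
  then show "(inverse (\<sigma> n) * (A z \<bullet> v n)) *\<^sub>R u n = (z \<bullet> u n) *\<^sub>R u n"
    by (simp add: svd_coeff[OF von svd] inner_commute)
qed

lemma tsvd_fin:
  fixes v :: "nat \<Rightarrow> 'b::real_inner"
  assumes von: "orthonormal_seq v" and pos: "\<And>n. \<sigma> n > 0" and a: "\<alpha> > 0"
    and F: "finite F" "F \<subseteq> {n. \<alpha> \<le> (\<sigma> n)\<^sup>2}"
  shows "(\<Sum>n\<in>F. (inverse (\<sigma> n) * (w \<bullet> v n))\<^sup>2) \<le> (norm w)\<^sup>2 / \<alpha>"
proof -
  have "(\<Sum>n\<in>F. (inverse (\<sigma> n) * (w \<bullet> v n))\<^sup>2) \<le> (\<Sum>n\<in>F. (w \<bullet> v n)\<^sup>2 / \<alpha>)"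
  proof (rule sum_mono)
    fix n assume "n \<in> F"
    then have s: "\<alpha> \<le> (\<sigma> n)\<^sup>2" using F by auto
    have "(inverse (\<sigma> n) * (w \<bullet> v n))\<^sup>2 = (w \<bullet> v n)\<^sup>2 / (\<sigma> n)\<^sup>2"
      by (simp add: power_mult_distrib power_inverse divide_inverse)
    also have "\<dots> \<le> (w \<bullet> v n)\<^sup>2 / \<alpha>"
      using s a by (intro divide_left_mono) (auto intro!: mult_pos_pos)
    finally show "(inverse (\<sigma> n) * (w \<bullet> v n))\<^sup>2 \<le> (w \<bullet> v n)\<^sup>2 / \<alpha>" .
  qed
  also have "\<dots> = (\<Sum>n\<in>F. (w \<bullet> v n)\<^sup>2) / \<alpha>" by (simp add: sum_divide_distrib)
  also have "\<dots> \<le> (norm w)\<^sup>2 / \<alpha>"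
    using bessel_fin[OF von F(1)] a by (intro divide_right_mono) auto
  finally show ?thesis .
qed

lemma tsvd_norm:
  fixes u :: "nat \<Rightarrow> 'a::{real_inner,complete_space}" and v :: "nat \<Rightarrow> 'b::real_inner"
  assumes uon: "orthonormal_seq u" and von: "orthonormal_seq v" and pos: "\<And>n. \<sigma> n > 0" and a: "\<alpha> > 0"
  shows "norm (tsvd \<sigma> u v \<alpha> w) \<le> norm w / sqrt \<alpha>"
  unfolding tsvd_def
proof (rule norm_infsum_finite_bound)
  fix F assume F: "finite F" "F \<subseteq> {n. \<alpha> \<le> (\<sigma> n)\<^sup>2}"
  have "(norm (\<Sum>n\<in>F. (inverse (\<sigma> n) * (w \<bullet> v n)) *\<^sub>R u n))\<^sup>2 \<le> (norm w)\<^sup>2 / \<alpha>"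
    using ons_fin_norm[OF uon F(1), of "\<lambda>n. inverse (\<sigma> n) * (w \<bullet> v n)"] tsvd_fin[OF von pos a F]
    by simp
  also have "\<dots> = (norm w / sqrt \<alpha>)\<^sup>2" using a by (simp add: power_divide)
  finally show "norm (\<Sum>n\<in>F. (inverse (\<sigma> n) * (w \<bullet> v n)) *\<^sub>R u n) \<le> norm w / sqrt \<alpha>"
    by (rule power2_le_imp_le) (use a in simp)
qed

lemma tsvd_summ:
  fixes u :: "nat \<Rightarrow> 'a::{real_inner,complete_space}" and v :: "nat \<Rightarrow> 'b::real_inner"
  assumes uon: "orthonormal_seq u" and von: "orthonormal_seq v" and pos: "\<And>n. \<sigma> n > 0" and a: "\<alpha> > 0"
  shows "(\<lambda>n. (inverse (\<sigma> n) * (w \<bullet> v n)) *\<^sub>R u n) summable_on {n. \<alpha> \<le> (\<sigma> n)\<^sup>2}"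
  by (rule ons_summable[OF uon]) (rule tsvd_fin[OF von pos a])

lemma tsvd_diff:
  fixes u :: "nat \<Rightarrow> 'a::{real_inner,complete_space}" and v :: "nat \<Rightarrow> 'b::real_inner"
  assumes uon: "orthonormal_seq u" and von: "orthonormal_seq v" and pos: "\<And>n. \<sigma> n > 0" and a: "\<alpha> > 0"
  shows "tsvd \<sigma> u v \<alpha> (y1 - y2) = tsvd \<sigma> u v \<alpha> y1 - tsvd \<sigma> u v \<alpha> y2"
  unfolding tsvd_def
  by (simp add: inner_diff_left right_diff_distrib scaleR_diff_left
      my_infsum_diff[OF tsvd_summ[OF uon von pos a] tsvd_summ[OF uon von pos a]])

lemma svdpow_bound:
  fixes u :: "nat \<Rightarrow> 'a::{real_inner,complete_space}" and \<omega> :: 'a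
  assumes uon: "orthonormal_seq u" and pos: "\<And>n. \<sigma> n > 0" and a: "\<alpha> > 0" and mu: "\<mu> > 0"
  defines "s \<equiv> svd_pow \<sigma> u \<mu> \<omega>"
  shows "norm (s - Qp u {n. \<alpha> \<le> (\<sigma> n)\<^sup>2} s) \<le> \<alpha> powr \<mu> * norm \<omega>"
proof (cases "(\<lambda>n. (\<sigma> n powr (2 * \<mu>) * (\<omega> \<bullet> u n)) *\<^sub>R u n) summable_on UNIV")
  case False
  then have "s = 0" unfolding s_def svd_pow_def by (simp add: infsum_not_exists)
  then show ?thesis using a by (simp add: Q_zero[OF uon])
next
  case True
  define S where "S = {n. \<alpha> \<le> (\<sigma> n)\<^sup>2}"
  define d where "d n = \<sigma> n powr (2 * \<mu>) * (\<omega> \<bullet> u n)" for n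
  have sdef: "s = infsum (\<lambda>n. d n *\<^sub>R u n) UNIV" unfolding s_def svd_pow_def d_def ..
  have T: "(\<lambda>n. d n *\<^sub>R u n) summable_on UNIV" using True unfolding d_def .
  have su: "s \<bullet> u n = d n" for n
    unfolding sdef using ons_infsum_inner[OF uon T] by simp
  have Qs: "Qp u S s = infsum (\<lambda>n. d n *\<^sub>R u n) S"
    unfolding Qp_def su ..
  have sumS: "(\<lambda>n. d n *\<^sub>R u n) summable_on B" for B
    using Q_summ[OF uon, of s B] by (simp add: su)
  have "infsum (\<lambda>n. d n *\<^sub>R u n) (S \<union> (- S)) = infsum (\<lambda>n. d n *\<^sub>R u n) S + infsum (\<lambda>n. d n *\<^sub>R u n) (- S)"
    by (rule infsum_Un_disjoint[OF sumS sumS]) auto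
  then have e1: "s = infsum (\<lambda>n. d n *\<^sub>R u n) S + infsum (\<lambda>n. d n *\<^sub>R u n) (- S)"
    using sdef by simp
  have "s - Qp u S s = s - infsum (\<lambda>n. d n *\<^sub>R u n) S" by (simp only: Qs)
  also have "\<dots> = infsum (\<lambda>n. d n *\<^sub>R u n) (- S)"
    by (subst e1) simp
  finally have eq: "s - Qp u S s = infsum (\<lambda>n. d n *\<^sub>R u n) (- S)" .
  have "norm (infsum (\<lambda>n. d n *\<^sub>R u n) (- S)) \<le> \<alpha> powr \<mu> * norm \<omega>"
  proof (rule norm_infsum_finite_bound)
    fix F assume F: "finite F" "F \<subseteq> - S"
    have "(\<Sum>n\<in>F. (d n)\<^sup>2) \<le> (\<Sum>n\<in>F. (\<alpha> powr \<mu>)\<^sup>2 * (\<omega> \<bullet> u n)\<^sup>2)"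
    proof (rule sum_mono)
      fix n assume "n \<in> F"
      then have lt: "(\<sigma> n)\<^sup>2 < \<alpha>" using F S_def by auto
      have p: "\<sigma> n powr (2 * \<mu>) = ((\<sigma> n)\<^sup>2) powr \<mu>"
        using pos[of n] by (simp add: powr_powr[symmetric] powr_realpow)
      have "((\<sigma> n)\<^sup>2) powr \<mu> \<le> \<alpha> powr \<mu>"
        using lt mu by (intro powr_mono2) auto
      then have "\<sigma> n powr (2 * \<mu>) \<le> \<alpha> powr \<mu>" "0 \<le> \<sigma> n powr (2 * \<mu>)" using p by auto
      then have "(\<sigma> n powr (2 * \<mu>))\<^sup>2 \<le> (\<alpha> powr \<mu>)\<^sup>2"
        by (intro power_mono) auto
      then show "(d n)\<^sup>2 \<le> (\<alpha> powr \<mu>)\<^sup>2 * (\<omega> \<bullet> u n)\<^sup>2"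
        unfolding d_def power_mult_distrib by (intro mult_right_mono) auto
    qed
    also have "\<dots> = (\<alpha> powr \<mu>)\<^sup>2 * (\<Sum>n\<in>F. (\<omega> \<bullet> u n)\<^sup>2)" by (simp add: sum_distrib_left)
    also have "\<dots> \<le> (\<alpha> powr \<mu>)\<^sup>2 * (norm \<omega>)\<^sup>2"
      by (intro mult_left_mono bessel_fin[OF uon F(1)]) auto
    also have "\<dots> = (\<alpha> powr \<mu> * norm \<omega>)\<^sup>2" by (simp add: power_mult_distrib)
    finally have "(norm (\<Sum>n\<in>F. d n *\<^sub>R u n))\<^sup>2 \<le> (\<alpha> powr \<mu> * norm \<omega>)\<^sup>2"
      using ons_fin_norm[OF uon F(1), of d] by simp
    then show "norm (\<Sum>n\<in>F. d n *\<^sub>R u n) \<le> \<alpha> powr \<mu> * norm \<omega>"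
      by (rule power2_le_imp_le) simp
  qed
  then show ?thesis using eq S_def by simp
qed


lemma tri3: "norm (a + b - c) \<le> norm a + norm (b::'a::real_normed_vector) + norm c"
  using norm_triangle_ineq4[of "a+b" c] norm_triangle_ineq[of a b] by linarith

lemma main_bound:
  fixes A :: "'a::{real_inner,complete_space} \<Rightarrow> 'b::{real_inner,complete_space}"
  assumes uon: "orthonormal_seq u" and von: "orthonormal_seq v" and pos: "\<And>n. \<sigma> n > 0"
    and svd: "\<And>x. ((\<lambda>n. (\<sigma> n * (u n \<bullet> x)) *\<^sub>R v n) has_sum A x) UNIV"
    and lip: "L-lipschitz_on UNIV (nu_op A \<sigma> u v U \<alpha>)"
    and a: "\<alpha> > 0" and mu: "\<mu> > 0" and rho: "\<rho> > 0"
  shows "norm (R_op A \<sigma> u v U \<alpha> y - x) \<le>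
    (1 + L) * (norm (A x - y) / sqrt \<alpha>) + (dist_fun A \<sigma> u v U \<alpha> x \<rho> \<mu> + \<alpha> powr \<mu> * \<rho>)"
proof -
  define S where "S = {n. \<alpha> \<le> (\<sigma> n)\<^sup>2}"
  define T where "T = tsvd \<sigma> u v \<alpha>"
  define nu where "nu = nu_op A \<sigma> u v U \<alpha>"
  define Q where "Q = Qp u S"
  have TA: "T (A z) = Q z" for z
    unfolding T_def Q_def S_def by (rule tsvd_A[OF von pos svd])
  have nuQ: "Q (nu z) = 0" for z
  proof -
    have "nu z = U \<alpha> z - Q (U \<alpha> z)" unfolding nu_def nu_op_def TA[symmetric] T_def ..
    then show ?thesis unfolding Q_def by (simp add: Q_diff[OF uon] Q_idem[OF uon])
  qed
  have Qd: "Q (a - b) = Q a - Q b" for a b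
    unfolding Q_def by (rule Q_diff[OF uon])
  define t where "t = x - T (A x) - nu (T (A x))"
  have tw: "norm t \<le> norm (x - nu (T (A x)) - svd_pow \<sigma> u \<mu> \<omega>) + \<alpha> powr \<mu> * \<rho>"
    if om: "norm \<omega> \<le> \<rho>" for \<omega>
  proof -
    define s where "s = svd_pow \<sigma> u \<mu> \<omega>"
    define w where "w = x - nu (T (A x)) - s"
    have Qw: "Q w = Q x - Q s"
      unfolding w_def by (simp add: Qd nuQ)
    have "t = (w - Q w) + (s - Q s)"
      by (simp only: Qw) (simp add: t_def TA w_def)
    then have "norm t \<le> norm (w - Q w) + norm (s - Q s)"
      by (simp add: norm_triangle_ineq)
    also have "\<dots> \<le> norm w + \<alpha> powr \<mu> * norm \<omega>"
    proof -
      have "norm (s - Q s) \<le> \<alpha> powr \<mu> * norm \<omega>"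
        unfolding Q_def s_def S_def by (rule svdpow_bound[OF uon]) (use pos a mu in auto)
      moreover have "norm (w - Q w) \<le> norm w" unfolding Q_def by (rule Q_contr[OF uon])
      ultimately show ?thesis by linarith
    qed
    also have "\<dots> \<le> norm w + \<alpha> powr \<mu> * \<rho>"
      using om by (simp add: mult_left_mono)
    finally show ?thesis unfolding w_def s_def .
  qed
  have tb: "norm t \<le> dist_fun A \<sigma> u v U \<alpha> x \<rho> \<mu> + \<alpha> powr \<mu> * \<rho>"
  proof -
    let ?D = "{norm (x - nu_op A \<sigma> u v U \<alpha> (tsvd \<sigma> u v \<alpha> (A x)) - svd_pow \<sigma> u \<mu> \<omega>) | \<omega>. norm \<omega> \<le> \<rho>}"
    have "norm t - \<alpha> powr \<mu> * \<rho> \<le> Inf ?D"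
    proof (rule cInf_greatest)
      have "norm (0::'a) \<le> \<rho>" using rho by simp
      then show "?D \<noteq> {}" by blast
    next
      fix d assume "d \<in> ?D"
      then obtain \<omega> where om: "norm \<omega> \<le> \<rho>"
        and d: "d = norm (x - nu_op A \<sigma> u v U \<alpha> (tsvd \<sigma> u v \<alpha> (A x)) - svd_pow \<sigma> u \<mu> \<omega>)"
        by blast
      show "norm t - \<alpha> powr \<mu> * \<rho> \<le> d"
        using tw[OF om] unfolding d nu_def T_def by linarith
    qed
    then show ?thesis unfolding dist_fun_def by linarith
  qed
  have L0: "L \<ge> 0" using lip by (rule lipschitz_on_nonneg)
  have "R_op A \<sigma> u v U \<alpha> y - x = (T y - T (A x)) + (nu (T y) - nu (T (A x))) - t"
    unfolding R_op_def t_def T_def nu_def by (simp add: algebra_simps)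
  then have n1: "norm (R_op A \<sigma> u v U \<alpha> y - x) \<le> norm (T y - T (A x)) + norm (nu (T y) - nu (T (A x))) + norm t"
    using tri3 by metis
  have n2: "norm (nu (T y) - nu (T (A x))) \<le> L * norm (T y - T (A x))"
    using lipschitz_onD[OF lip[folded nu_def], of "T y" "T (A x)"] by (simp add: dist_norm)
  have "T y - T (A x) = T (y - A x)"
    unfolding T_def by (rule tsvd_diff[OF uon von pos a, symmetric])
  moreover have "norm (T (y - A x)) \<le> norm (A x - y) / sqrt \<alpha>"
  proof -
    have "norm (T (y - A x)) \<le> norm (y - A x) / sqrt \<alpha>"
      unfolding T_def by (rule tsvd_norm[OF uon von]) (use pos a in auto)
    then show ?thesis by (simp add: norm_minus_commute)
  qed
  ultimately have n3: "norm (T y - T (A x)) \<le> norm (A x - y) / sqrt \<alpha>" by simp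
  have "L * norm (T y - T (A x)) \<le> L * (norm (A x - y) / sqrt \<alpha>)"
    using n3 L0 by (rule mult_left_mono)
  moreover have "(1 + L) * (norm (A x - y) / sqrt \<alpha>) = norm (A x - y) / sqrt \<alpha> + L * (norm (A x - y) / sqrt \<alpha>)"
    by (simp only: distrib_right mult_1)
  ultimately show ?thesis using n1 n2 n3 tb by linarith
qed

lemma rate_arith:
  fixes \<delta> c1 c2 \<alpha> \<mu> :: real
  assumes d: "\<delta> > 0" and c1: "c1 > 0" and c2: "c2 > 0" and mu: "\<mu> > 0"
    and lo: "c1 * \<delta> powr (2 / (2 * \<mu> + 1)) \<le> \<alpha>" and hi: "\<alpha> \<le> c2 * \<delta> powr (2 / (2 * \<mu> + 1))"
  shows "\<delta> / sqrt \<alpha> \<le> \<delta> powr (2 * \<mu> / (2 * \<mu> + 1)) / sqrt c1"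
    and "\<alpha> powr \<mu> \<le> c2 powr \<mu> * \<delta> powr (2 * \<mu> / (2 * \<mu> + 1))"
proof -
  define p where "p = 2 / (2 * \<mu> + 1)"
  define q where "q = 2 * \<mu> / (2 * \<mu> + 1)"
  have dpos: "2 * \<mu> + 1 > 0" using mu by simp
  have dne: "2 * \<mu> + 1 \<noteq> 0" using dpos by simp
  have "4 * \<mu> + 2 \<noteq> 0" using dpos by simp
  then have p2: "p / 2 = 1 / (2 * \<mu> + 1)" unfolding p_def using dne by (simp add: field_simps)
  have "1 / (2 * \<mu> + 1) + 2 * \<mu> / (2 * \<mu> + 1) = 1"
    using dne by (simp add: field_simps)
  then have pq: "p / 2 + q = 1" unfolding p2 q_def .
  have h: "\<delta> powr (p/2) * \<delta> powr q = \<delta>"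
    using d by (simp add: powr_add[symmetric] pq)
  have sq: "sqrt (c1 * \<delta> powr p) = sqrt c1 * \<delta> powr (p/2)"
    using d by (simp add: real_sqrt_mult powr_half_sqrt[symmetric] powr_powr)
  have pos1: "0 < sqrt c1 * \<delta> powr (p/2)" using c1 d by simp
  have "sqrt (c1 * \<delta> powr p) \<le> sqrt \<alpha>"
    using lo[folded p_def] by (rule real_sqrt_le_mono)
  then have sle: "sqrt c1 * \<delta> powr (p/2) \<le> sqrt \<alpha>" by (simp only: sq)
  have sa: "0 < sqrt \<alpha>" using sle pos1 by linarith
  from sle have "\<delta> / sqrt \<alpha> \<le> \<delta> / (sqrt c1 * \<delta> powr (p/2))"
    using pos1 d sa by (intro divide_left_mono) (auto intro!: mult_pos_pos)
  also have "\<dots> = \<delta> powr q / sqrt c1"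
    using d c1 by (subst (1) h[symmetric]) (simp add: field_simps)
  finally show "\<delta> / sqrt \<alpha> \<le> \<delta> powr (2 * \<mu> / (2 * \<mu> + 1)) / sqrt c1" unfolding q_def .
  have a0: "0 \<le> \<alpha>" using lo c1 d by (smt (verit) mult_pos_pos powr_gt_zero)
  have "\<alpha> powr \<mu> \<le> (c2 * \<delta> powr p) powr \<mu>"
    using a0 hi[folded p_def] mu by (intro powr_mono2) auto
  also have "\<dots> = c2 powr \<mu> * \<delta> powr (p * \<mu>)"
    by (simp add: powr_mult powr_powr)
  also have "p * \<mu> = q" by (simp add: p_def q_def)
  finally show "\<alpha> powr \<mu> \<le> c2 powr \<mu> * \<delta> powr (2 * \<mu> / (2 * \<mu> + 1))" unfolding q_def .
qed


theorem theorem4p2: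
  fixes A :: "'a::{real_inner,complete_space} \<Rightarrow> 'b::{real_inner,complete_space}"
    and \<sigma> :: "nat \<Rightarrow> real" and u :: "nat \<Rightarrow> 'a" and v :: "nat \<Rightarrow> 'b"
    and U :: "real \<Rightarrow> 'a \<Rightarrow> 'a" and N :: "'a \<Rightarrow> 'a"
    and \<rho> \<mu> :: real and M\<rho>\<mu> :: "'a set" and \<alpha>c :: "real \<Rightarrow> real"
  assumes A_lin: "bounded_linear A"
    and u_on: "orthonormal_seq u" and v_on: "orthonormal_seq v"
    and \<sigma>_pos: "\<And>n. \<sigma> n > 0"
    and svd: "\<And>x. ((\<lambda>n. (\<sigma> n * (u n \<bullet> x)) *\<^sub>R v n) has_sum A x) UNIV"
    and nsn: "null_space_network A N"
    and adapt: "adapted A (tsvd \<sigma> u v) (nu_op A \<sigma> u v U) N"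
    and \<rho>_pos: "\<rho> > 0" and \<mu>_pos: "\<mu> > 0"
    and M_sub: "M\<rho>\<mu> \<subseteq> (\<lambda>z. z + N z) ` orth_compl (ker_op A)"
    and d_rate: "\<forall>x\<in>M\<rho>\<mu>. \<exists>C. \<forall>\<^sub>F \<alpha> in at_right 0.
                    dist_fun A \<sigma> u v U \<alpha> x \<rho> \<mu> \<le> C * \<alpha> powr \<mu>"
    and param: "\<exists>c1>0. \<exists>c2>0. \<forall>\<^sub>F \<delta> in at_right 0.
                    c1 * \<delta> powr (2 / (2 * \<mu> + 1)) \<le> \<alpha>c \<delta> \<and>
                    \<alpha>c \<delta> \<le> c2 * \<delta> powr (2 / (2 * \<mu> + 1))"
  shows "\<forall>x\<in>M\<rho>\<mu>. \<exists>C. \<forall>\<^sub>F \<delta> in at_right 0. \<forall>y\<delta>.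
           norm (A x - y\<delta>) \<le> \<delta> \<longrightarrow>
           norm (R_op A \<sigma> u v U (\<alpha>c \<delta>) y\<delta> - x) \<le> C * \<delta> powr (2 * \<mu> / (2 * \<mu> + 1))"
proof
  fix x assume x: "x \<in> M\<rho>\<mu>"
  define p where "p = 2 / (2 * \<mu> + 1)"
  define q where "q = 2 * \<mu> / (2 * \<mu> + 1)"
  obtain C where "\<forall>\<^sub>F \<alpha> in at_right 0. dist_fun A \<sigma> u v U \<alpha> x \<rho> \<mu> \<le> C * \<alpha> powr \<mu>"
    using d_rate x by blast
  then obtain b where b: "b > 0"
    and bC: "\<And>\<alpha>. 0 < \<alpha> \<Longrightarrow> \<alpha> < b \<Longrightarrow> dist_fun A \<sigma> u v U \<alpha> x \<rho> \<mu> \<le> C * \<alpha> powr \<mu>"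
    unfolding eventually_at_right_field by auto
  obtain c1 c2 where c1: "c1 > 0" and c2: "c2 > 0"
    and evp: "\<forall>\<^sub>F \<delta> in at_right 0. c1 * \<delta> powr p \<le> \<alpha>c \<delta> \<and> \<alpha>c \<delta> \<le> c2 * \<delta> powr p"
    using param unfolding p_def by blast
  obtain L where L: "L > 0" and lip: "\<And>\<alpha>. \<alpha> > 0 \<Longrightarrow> L-lipschitz_on UNIV (nu_op A \<sigma> u v U \<alpha>)"
    using adapt unfolding adapted_def by blast
  have p0: "p > 0" using \<mu>_pos unfolding p_def by simp
  have "((\<lambda>\<delta>. c2 * \<delta> powr p) \<longlongrightarrow> c2 * 0) (at_right 0)"
    by (intro tendsto_mult tendsto_const tendsto_zero_powrI[where b=p] tendsto_ident_at p0)
       (simp add: eventually_at_right_field, rule exI[of _ 1], simp)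
  then have evb: "\<forall>\<^sub>F \<delta> in at_right 0. c2 * \<delta> powr p < b"
    using b by (intro order_tendstoD(2)) auto
  define K where "K = (1 + L) / sqrt c1 + \<bar>C + \<rho>\<bar> * c2 powr \<mu>"
  show "\<exists>K. \<forall>\<^sub>F \<delta> in at_right 0. \<forall>y\<delta>.
           norm (A x - y\<delta>) \<le> \<delta> \<longrightarrow>
           norm (R_op A \<sigma> u v U (\<alpha>c \<delta>) y\<delta> - x) \<le> K * \<delta> powr (2 * \<mu> / (2 * \<mu> + 1))"
  proof (intro exI[of _ K])
    show "\<forall>\<^sub>F \<delta> in at_right 0. \<forall>y\<delta>.
           norm (A x - y\<delta>) \<le> \<delta> \<longrightarrow>
           norm (R_op A \<sigma> u v U (\<alpha>c \<delta>) y\<delta> - x) \<le> K * \<delta> powr (2 * \<mu> / (2 * \<mu> + 1))"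
      using evp evb eventually_at_right_less[of "0::real"]
    proof eventually_elim
      case (elim \<delta>)
      then have d: "\<delta> > 0" and lo: "c1 * \<delta> powr p \<le> \<alpha>c \<delta>" and hi: "\<alpha>c \<delta> \<le> c2 * \<delta> powr p"
        and hb: "c2 * \<delta> powr p < b" by auto
      define \<alpha> where "\<alpha> = \<alpha>c \<delta>"
      have a: "\<alpha> > 0" unfolding \<alpha>_def using lo c1 d
        by (smt (verit) mult_pos_pos powr_gt_zero)
      have ab: "\<alpha> < b" unfolding \<alpha>_def using hi hb by linarith
      have dC: "dist_fun A \<sigma> u v U \<alpha> x \<rho> \<mu> \<le> C * \<alpha> powr \<mu>" by (rule bC[OF a ab])
      have r1: "\<delta> / sqrt \<alpha> \<le> \<delta> powr q / sqrt c1"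
        and r2: "\<alpha> powr \<mu> \<le> c2 powr \<mu> * \<delta> powr q"
        using rate_arith[OF d c1 c2 \<mu>_pos lo[unfolded p_def \<alpha>_def[symmetric]] hi[unfolded p_def \<alpha>_def[symmetric]]]
        unfolding q_def by auto
      show ?case
      proof (intro allI impI)
        fix y assume y: "norm (A x - y) \<le> \<delta>"
        have mb: "norm (R_op A \<sigma> u v U \<alpha> y - x) \<le>
            (1 + L) * (norm (A x - y) / sqrt \<alpha>) + (dist_fun A \<sigma> u v U \<alpha> x \<rho> \<mu> + \<alpha> powr \<mu> * \<rho>)"
          by (rule main_bound[OF u_on v_on \<sigma>_pos svd lip[OF a] a \<mu>_pos \<rho>_pos])
        have t1: "(1 + L) * (norm (A x - y) / sqrt \<alpha>) \<le> (1 + L) * (\<delta> powr q / sqrt c1)"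
        proof -
          have "norm (A x - y) / sqrt \<alpha> \<le> \<delta> / sqrt \<alpha>"
            using y a by (simp add: divide_right_mono)
          then show ?thesis using r1 L by (intro mult_left_mono) auto
        qed
        have t2: "dist_fun A \<sigma> u v U \<alpha> x \<rho> \<mu> + \<alpha> powr \<mu> * \<rho> \<le> \<bar>C + \<rho>\<bar> * (c2 powr \<mu> * \<delta> powr q)"
        proof -
          have "dist_fun A \<sigma> u v U \<alpha> x \<rho> \<mu> + \<alpha> powr \<mu> * \<rho> \<le> (C + \<rho>) * \<alpha> powr \<mu>"
            using dC by (simp add: algebra_simps)
          also have "\<dots> \<le> \<bar>C + \<rho>\<bar> * \<alpha> powr \<mu>"
            by (intro mult_right_mono) auto
          also have "\<dots> \<le> \<bar>C + \<rho>\<bar> * (c2 powr \<mu> * \<delta> powr q)"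
            using r2 by (intro mult_left_mono) auto
          finally show ?thesis .
        qed
        have "K * \<delta> powr q = (1 + L) * (\<delta> powr q / sqrt c1) + \<bar>C + \<rho>\<bar> * (c2 powr \<mu> * \<delta> powr q)"
          unfolding K_def by (simp add: algebra_simps)
        then show "norm (R_op A \<sigma> u v U (\<alpha>c \<delta>) y - x) \<le> K * \<delta> powr (2 * \<mu> / (2 * \<mu> + 1))"
          using mb t1 t2 unfolding \<alpha>_def q_def by linarith
      qed
    qed
  qed
qed

end
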